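(* Let $U\in\mathbb{R}^{n\times d}$, let $\mathbf{x}_*\in\mathbb{R}^d$ be $s$-sparse, $\mathbf{e}\in\mathbb{R}^n$ and $\mathbf{y}=U\mathbf{x}_*+\mathbf{e}$. Let $\mathbf{x}_t$ be an iterate of Algorithm 1 with support $\mathcal{S}_t$, and $\mathcal{S}_*$ the support of $\mathbf{x}_*$. If $|\mathcal{S}_t\setminus\mathcal{S}_*|\le s$, $\|\mathbf{x}_t-\mathbf{x}_*\|_2\le\Delta_t$ and $\lambda_t=\|U^\top\mathbf{e}\|_\infty+\frac{\delta_s+\sqrt2\theta_{s,s}}{\sqrt s}\Delta_t$, then \[ \|\mathbf{x}_{t+1}-\mathbf{x}_*\|_2\le(\delta_s+\sqrt2\theta_{s,s}+\delta_{3s})\Delta_t+(1+\sqrt2)\sqrt s\|U^\top\mathbf{e}\|_\infty . \]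
   Context: $U_{\mathcal T}$ is the column submatrix of $U$ indexed by $\mathcal T$. $\delta_k$ is the smallest constant $\ge0$ with $(1-\delta_k)\|\mathbf{v}\|_2^2\le\|U_{\mathcal T}\mathbf{v}\|_2^2\le(1+\delta_k)\|\mathbf{v}\|_2^2$ for all $|\mathcal T|\le k$, $\mathbf{v}\in\mathbb{R}^{|\mathcal T|}$; $\theta_{s,s}$ (with $2s\le d$) is the smallest constant with $|\langle U_{\mathcal T}\mathbf{v},U_{\mathcal T'}\mathbf{v}'\rangle|\le\theta_{s,s}\|\mathbf{v}\|_2\|\mathbf{v}'\|_2$ for all disjoint $\mathcal T,\mathcal T'$ of size at most $s$. Algorithm 1: $\mathbf{x}_1=0$ and $\mathbf{x}_{t+1}=\mathrm{sign}(\widehat{\mathbf{x}}_t)[|\widehat{\mathbf{x}}_t|-\lambda_t]_+$ with $\widehat{\mathbf{x}}_t=\mathbf{x}_t-U^\top(U\mathbf{x}_t-\mathbf{y})$ (componentwise), for parameters $\lambda_t>0$. *)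

theory Defs
  imports "HOL-Analysis.Analysis"
begin

definition supp :: "real^'d \<Rightarrow> 'd set" where
  "supp x = {i. x $ i \<noteq> 0}"

text \<open>Restricted isometry constant delta_k of U. A vector v in R^|T| fed to the
  column submatrix U_T is identified with the vector of R^d supported in T, so that
  U_T v = U *v v.\<close>
definition rip_const :: "real^'d^'n \<Rightarrow> nat \<Rightarrow> real" where
  "rip_const U k = Inf {c. c \<ge> 0 \<and>
     (\<forall>T v. card T \<le> k \<and> supp v \<subseteq> T \<longrightarrow>
        (1 - c) * (norm v)\<^sup>2 \<le> (norm (U *v v))\<^sup>2 \<and>
        (norm (U *v v))\<^sup>2 \<le> (1 + c) * (norm v)\<^sup>2)}"

definition roc_const :: "real^'d^'n \<Rightarrow> nat \<Rightarrow> real" where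
  "roc_const U s = Inf {c. c \<ge> 0 \<and>
     (\<forall>T T' v v'. card T \<le> s \<and> card T' \<le> s \<and> T \<inter> T' = {} \<and>
        supp v \<subseteq> T \<and> supp v' \<subseteq> T' \<longrightarrow>
        \<bar>(U *v v) \<bullet> (U *v v')\<bar> \<le> c * norm v * norm v')}"

definition soft_thr :: "real \<Rightarrow> real^'d \<Rightarrow> real^'d" where
  "soft_thr lam z = (\<chi> i. sgn (z $ i) * max (\<bar>z $ i\<bar> - lam) 0)"

text \<open>Algorithm 1. Index shift: ista U y lam 0 is the paper's x_1, and
  ista U y lam (Suc t) is obtained from ista U y lam t with threshold lam t.\<close>
primrec ista :: "real^'d^'n \<Rightarrow> real^'n \<Rightarrow> (nat \<Rightarrow> real) \<Rightarrow> nat \<Rightarrow> real^'d" where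
  "ista U y lam 0 = 0"
| "ista U y lam (Suc t) =
     soft_thr (lam t) (ista U y lam t - transpose U *v (U *v ista U y lam t - y))"

end

theory Submission imports Defs begin

definition restr :: "'d set \<Rightarrow> real^'d \<Rightarrow> real^'d" where
  "restr T x = (\<chi> i. if i \<in> T then x$i else 0)"

lemma norm_sq_sum: "(norm (x::real^'d))^2 = (\<Sum>i\<in>UNIV. (x$i)^2)"
  by (simp add: norm_vec_def L2_set_def sum_nonneg)

lemma supp_restr: "supp (restr T x) \<subseteq> T"
  by (auto simp: supp_def restr_def)

lemma supp_add: "supp (x + y) \<subseteq> supp x \<union> supp y"
  by (auto simp: supp_def)
lemma supp_diff: "supp (x - y) \<subseteq> supp x \<union> supp y"
  by (auto simp: supp_def)
lemma supp_scale: "supp (c *\<^sub>R x) \<subseteq> supp x"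
  by (auto simp: supp_def)

lemma rip_bound:
  fixes U :: "real^'d^'n"
  assumes "card T \<le> k" "supp v \<subseteq> T"
  shows "\<bar>(norm (U *v v))^2 - (norm v)^2\<bar> \<le> rip_const U k * (norm v)^2"
    and "0 \<le> rip_const U k"
proof -
  define S where "S = {c. c \<ge> 0 \<and> (\<forall>T v. card T \<le> k \<and> supp v \<subseteq> T \<longrightarrow>
        (1 - c) * (norm v)\<^sup>2 \<le> (norm (U *v v))\<^sup>2 \<and>
        (norm (U *v v))\<^sup>2 \<le> (1 + c) * (norm v)\<^sup>2)}"
  have rc: "rip_const U k = Inf S" unfolding rip_const_def S_def ..
  obtain K where K: "K > 0" "\<And>x. norm (U *v x) \<le> norm x * K"
    using bounded_linear.pos_bounded[OF matrix_vector_mul_bounded_linear[of U]] by blast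
  have "1 + K^2 \<in> S"
  proof -
    { fix v :: "real^'d"
      have "norm (U *v v) ^2 \<le> (norm v * K)^2" using K(2)[of v] by (simp add: power_mono)
      moreover have "(norm v * K)^2 \<le> (1 + (1+K^2)) * (norm v)^2"
        by (simp add: power_mult_distrib algebra_simps)
      moreover have "(1 - (1+K^2)) * (norm v)^2 \<le> 0" by simp
      ultimately have "(1 - (1+K^2)) * (norm v)^2 \<le> (norm (U *v v))^2 \<and> (norm (U *v v))^2 \<le> (1 + (1+K^2)) * (norm v)^2"
        by (smt (verit) zero_le_power2) }
    thus ?thesis unfolding S_def by auto
  qed
  hence ne: "S \<noteq> {}" by auto
  show nn: "0 \<le> rip_const U k" unfolding rc by (rule cInf_greatest[OF ne]) (auto simp: S_def)
  show "\<bar>(norm (U *v v))^2 - (norm v)^2\<bar> \<le> rip_const U k * (norm v)^2"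
  proof (cases "v = 0")
    case True thus ?thesis by simp
  next
    case False
    hence pos: "(norm v)^2 > 0" by simp
    have "\<bar>(norm (U *v v))^2 - (norm v)^2\<bar> / (norm v)^2 \<le> Inf S"
    proof (rule cInf_greatest[OF ne])
      fix c assume "c \<in> S"
      hence "\<bar>(norm (U *v v))^2 - (norm v)^2\<bar> \<le> c * (norm v)^2"
        using assms unfolding S_def by (auto simp: algebra_simps abs_le_iff)
      thus "\<bar>(norm (U *v v))^2 - (norm v)^2\<bar> / (norm v)^2 \<le> c"
        using pos by (simp add: divide_le_eq)
    qed
    thus ?thesis using pos unfolding rc by (simp add: divide_le_eq)
  qed
qed

lemma roc_bound:
  fixes U :: "real^'d^'n"
  assumes "card T \<le> s" "card T' \<le> s" "T \<inter> T' = {}" "supp v \<subseteq> T" "supp v' \<subseteq> T'"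
  shows "\<bar>(U *v v) \<bullet> (U *v v')\<bar> \<le> roc_const U s * norm v * norm v'"
    and "0 \<le> roc_const U s"
proof -
  define S where "S = {c. c \<ge> 0 \<and>
     (\<forall>T T' v v'. card T \<le> s \<and> card T' \<le> s \<and> T \<inter> T' = {} \<and>
        supp v \<subseteq> T \<and> supp v' \<subseteq> T' \<longrightarrow>
        \<bar>(U *v v) \<bullet> (U *v v')\<bar> \<le> c * norm v * norm v')}"
  have rc: "roc_const U s = Inf S" unfolding roc_const_def S_def ..
  obtain K where K: "K > 0" "\<And>x. norm (U *v x) \<le> norm x * K"
    using bounded_linear.pos_bounded[OF matrix_vector_mul_bounded_linear[of U]] by blast
  have "K^2 \<in> S"
  proof -
    { fix v v' :: "real^'d"
      have "\<bar>(U *v v) \<bullet> (U *v v')\<bar> \<le> norm (U *v v) * norm (U *v v')"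
        by (rule Cauchy_Schwarz_ineq2)
      also have "\<dots> \<le> (norm v * K) * (norm v' * K)"
        using K by (intro mult_mono) auto
      finally have "\<bar>(U *v v) \<bullet> (U *v v')\<bar> \<le> K^2 * norm v * norm v'"
        by (simp add: power2_eq_square algebra_simps) }
    thus ?thesis unfolding S_def by auto
  qed
  hence ne: "S \<noteq> {}" by auto
  show nn: "0 \<le> roc_const U s" unfolding rc by (rule cInf_greatest[OF ne]) (auto simp: S_def)
  show "\<bar>(U *v v) \<bullet> (U *v v')\<bar> \<le> roc_const U s * norm v * norm v'"
  proof (cases "v = 0 \<or> v' = 0")
    case True thus ?thesis by auto
  next
    case False
    hence pos: "norm v * norm v' > 0" by simp
    have "\<bar>(U *v v) \<bullet> (U *v v')\<bar> / (norm v * norm v') \<le> Inf S"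
    proof (rule cInf_greatest[OF ne])
      fix c assume "c \<in> S"
      hence "\<bar>(U *v v) \<bullet> (U *v v')\<bar> \<le> c * norm v * norm v'"
        using assms unfolding S_def by blast
      thus "\<bar>(U *v v) \<bullet> (U *v v')\<bar> / (norm v * norm v') \<le> c"
        using pos by (simp add: divide_le_eq mult.assoc)
    qed
    thus ?thesis using pos unfolding rc by (simp add: divide_le_eq mult.assoc)
  qed
qed


lemma inner_restr: "restr T x \<bullet> (y::real^'d) = (\<Sum>i\<in>T. x$i * y$i)"
proof -
  have "restr T x \<bullet> y = (\<Sum>i\<in>UNIV. if i \<in> T then x$i * y$i else 0)"
    unfolding inner_vec_def restr_def by (intro sum.cong) auto
  also have "\<dots> = (\<Sum>i\<in>UNIV \<inter> T. x$i * y$i)" by (rule sum.inter_restrict[symmetric]) simp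
  finally show ?thesis by simp
qed

lemma norm_restr_sq: "(norm (restr T (x::real^'d)))^2 = (\<Sum>i\<in>T. (x$i)^2)"
proof -
  have "(norm (restr T x))^2 = restr T x \<bullet> restr T x" by (simp add: power2_norm_eq_inner)
  also have "\<dots> = (\<Sum>i\<in>T. x$i * (restr T x)$i)" by (rule inner_restr)
  also have "\<dots> = (\<Sum>i\<in>T. (x$i)^2)" by (rule sum.cong) (auto simp: restr_def power2_eq_square)
  finally show ?thesis .
qed

lemma inner_transpose: "(u::real^'d) \<bullet> (transpose (U::real^'d^'n) *v w) = (U *v u) \<bullet> w"
  by (metis dot_lmul_matrix inner_commute transpose_matrix_vector)

lemma supp_zero_iff: "supp (x::real^'d) = {} \<longleftrightarrow> x = 0"
  by (auto simp: supp_def vec_eq_iff)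

lemma pol_bound:
  fixes U :: "real^'d^'n"
  assumes T: "card T \<le> k" and su: "supp u \<subseteq> T" and sh: "supp h \<subseteq> T"
  shows "\<bar>u \<bullet> h - (U *v u) \<bullet> (U *v h)\<bar> \<le> rip_const U k * norm u * norm h"
proof (cases "u = 0 \<or> h = 0")
  case True thus ?thesis by auto
next
  case False
  define B where "B = (\<lambda>a b::real^'d. a \<bullet> b - (U *v a) \<bullet> (U *v b))"
  have Q: "\<bar>B a a\<bar> \<le> rip_const U k * (norm a)^2" if "supp a \<subseteq> T" for a
    using rip_bound(1)[OF T that, of U] unfolding B_def
    by (simp add: power2_norm_eq_inner abs_minus_commute)
  define u1 where "u1 = (1 / norm u) *\<^sub>R u"
  define h1 where "h1 = (1 / norm h) *\<^sub>R h"
  have nu: "norm u1 = 1" "norm h1 = 1" using False by (auto simp: u1_def h1_def)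
  have s1: "supp (u1 + h1) \<subseteq> T" "supp (u1 - h1) \<subseteq> T"
    using supp_add[of u1 h1] supp_diff[of u1 h1] supp_scale[of _ u] supp_scale[of _ h] su sh
    unfolding u1_def h1_def by blast+
  have pol: "4 * B u1 h1 = B (u1 + h1) (u1 + h1) - B (u1 - h1) (u1 - h1)"
    unfolding B_def by (simp add: algebra_simps inner_add_left inner_add_right inner_diff_left inner_diff_right inner_commute)
  have nu2: "u1 \<bullet> u1 = 1" "h1 \<bullet> h1 = 1" using nu by (simp_all add: norm_eq_1)
  have par: "(norm (u1 + h1))^2 + (norm (u1 - h1))^2 = 4"
    using nu2 by (simp add: power2_norm_eq_inner algebra_simps inner_add_left inner_add_right inner_diff_left inner_diff_right inner_commute)
  have "\<bar>4 * B u1 h1\<bar> \<le> rip_const U k * (norm (u1 + h1))^2 + rip_const U k * (norm (u1 - h1))^2"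
    unfolding pol using Q[OF s1(1)] Q[OF s1(2)] by linarith
  also have "\<dots> = rip_const U k * 4" by (metis par distrib_left)
  finally have b1: "\<bar>B u1 h1\<bar> \<le> rip_const U k" by simp
  have "u = norm u *\<^sub>R u1" "h = norm h *\<^sub>R h1" using False by (auto simp: u1_def h1_def)
  hence "B u h = norm u * norm h * B u1 h1"
    unfolding B_def by (metis (no_types, lifting) B_def inner_scaleR_left inner_scaleR_right matrix_vector_mult_scaleR right_diff_distrib mult.assoc mult.left_commute)
  hence "\<bar>B u h\<bar> = norm u * norm h * \<bar>B u1 h1\<bar>" by (simp add: abs_mult)
  also have "\<dots> \<le> norm u * norm h * rip_const U k" using b1 by (simp add: mult_left_mono)
  finally show ?thesis unfolding B_def by (simp add: mult_ac)
qed

lemma soft_abs: assumes "l > 0" shows "\<bar>sgn z * max (\<bar>z\<bar> - l) 0\<bar> = max (\<bar>z\<bar> - (l::real)) 0"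
  using assms proof (cases z "0::real" rule: linorder_cases)
  case less thus ?thesis using assms by (simp add: abs_mult)
next
  case equal thus ?thesis using assms by simp
next
  case greater thus ?thesis using assms by (simp add: abs_mult)
qed

lemma soft_close: assumes "l > 0" shows "\<bar>sgn z * max (\<bar>z\<bar> - l) 0 - z\<bar> \<le> (l::real)"
  using assms proof (cases z "0::real" rule: linorder_cases)
  case less thus ?thesis using assms by (simp add: max_def)
next
  case equal thus ?thesis using assms by simp
next
  case greater thus ?thesis using assms by (simp add: max_def)
qed


theorem proposition3:
  fixes U :: "real^'d^'n" and xs :: "real^'d" and e y :: "real^'n"
    and lam :: "nat \<Rightarrow> real" and s t :: nat and Delta :: real
  assumes "2 * s \<le> CARD('d)"
    and "card (supp xs) \<le> s"
    and "y = U *v xs + e"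
    and "\<forall>k. lam k > 0"
    and "card (supp (ista U y lam t) - supp xs) \<le> s"
    and "norm (ista U y lam t - xs) \<le> Delta"
    and "lam t = infnorm (transpose U *v e)
           + (rip_const U s + sqrt 2 * roc_const U s) / sqrt s * Delta"
  shows "norm (ista U y lam (Suc t) - xs)
         \<le> (rip_const U s + sqrt 2 * roc_const U s + rip_const U (3 * s)) * Delta
           + (1 + sqrt 2) * sqrt s * infnorm (transpose U *v e)"
proof -
  define x where "x = ista U y lam t"
  define h where "h = x - xs"
  define E where "E = transpose U *v e"
  define En where "En = infnorm E"
  define g where "g = h - transpose U *v (U *v h)"
  define w where "w = g + E"
  define dl where "dl = rip_const U s"
  define th where "th = roc_const U s"
  define dth where "dth = rip_const U (3 * s)"
  define l where "l = lam t"
  define c where "c = (dl + sqrt 2 * th) * Delta"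
  define Ss where "Ss = supp xs"
  define A where "A = supp x - Ss"
  define J where "J = {i. i \<notin> Ss \<and> \<bar>w$i\<bar> > l}"
  define Jr where "Jr = J - A"
  define T2 where "T2 = Ss \<union> A \<union> Jr"
  have lpos: "l > 0" using assms(4) by (simp add: l_def)
  have hD: "norm h \<le> Delta" using assms(6) by (simp add: h_def x_def)
  have Dnn: "0 \<le> Delta" using hD norm_ge_zero order_trans by blast
  have dl0: "0 \<le> dl" unfolding dl_def using rip_bound(2)[of "{}" s 0 U] by (simp add: supp_def)
  have d30: "0 \<le> dth" unfolding dth_def using rip_bound(2)[of "{}" "3 * s" 0 U] by (simp add: supp_def)
  have th0: "0 \<le> th" unfolding th_def using roc_bound(2)[of "{}" s "{}" 0 0 U] by (simp add: supp_def)
  have c0: "0 \<le> c" unfolding c_def using dl0 th0 Dnn by simp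
  have lam_eq: "l = En + c / sqrt s" using assms(7) by (simp add: l_def En_def E_def dl_def th_def c_def)
  have En0: "0 \<le> En" unfolding En_def by (rule infnorm_pos_le)
  have lEn: "En \<le> l" using lam_eq c0 by simp
  have EnE: "\<bar>E$i\<bar> \<le> En" for i unfolding En_def by (rule component_le_infnorm_cart)
  have gi: "\<bar>w$i\<bar> \<le> \<bar>g$i\<bar> + En" for i
    using abs_triangle_ineq[of "g$i" "E$i"] EnE[of i] by (simp add: w_def)
  have x1: "ista U y lam (Suc t) = soft_thr l (xs + w)"
  proof -
    have "x - transpose U *v (U *v x - y) = xs + w"
      unfolding w_def g_def h_def E_def assms(3) by (simp add: algebra_simps)
    thus ?thesis by (simp add: x_def l_def)
  qed
  have suph: "supp h \<subseteq> Ss \<union> A" unfolding h_def Ss_def A_def supp_def by auto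
  have cardSs: "card Ss \<le> s" using assms(2) by (simp add: Ss_def)
  have cardA: "card A \<le> s" using assms(5) by (simp add: A_def Ss_def x_def)
  have cardJr: "card Jr \<le> s"
  proof (rule ccontr)
    assume "\<not> card Jr \<le> s"
    hence big: "s < card Jr" by simp
    have gbig: "\<bar>g$i\<bar> > c / sqrt s" if "i \<in> Jr" for i
      using that gi[of i] lam_eq by (auto simp: Jr_def J_def)
    show False
    proof (cases "s = 0")
      case True
      hence "Ss = {}" "A = {}" using cardSs cardA by auto
      hence "h = 0" using suph supp_zero_iff by blast
      hence g0: "g = 0" by (simp add: g_def)
      have "Jr \<noteq> {}" using big by auto
      then obtain i where "i \<in> Jr" by blast
      then show False using gbig[of i] g0 True by simp
    next
      case False
      obtain J' where J': "J' \<subseteq> Jr" "card J' = s" "finite J'"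
        using obtain_subset_with_card_n[of s Jr] big by auto
      define v where "v = restr J' g"
      define h1 where "h1 = restr Ss h"
      define h2 where "h2 = restr A h"
      have hsplit: "h = h1 + h2"
        unfolding h1_def h2_def restr_def vec_eq_iff using suph by (auto simp: supp_def A_def)
      have J'Ss: "J' \<inter> Ss = {}" and J'A: "J' \<inter> A = {}" using J' by (auto simp: Jr_def J_def)
      have vh: "v \<bullet> h = 0"
        unfolding v_def inner_restr using J'Ss J'A suph by (intro sum.neutral) (auto simp: supp_def)
      have vg: "v \<bullet> g = (norm v)^2"
        unfolding v_def norm_restr_sq inner_restr by (simp add: power2_eq_square)
      have "v \<bullet> g = - ((U *v v) \<bullet> (U *v h))"
        unfolding g_def inner_diff_right inner_transpose vh by simp
      also have "(U *v v) \<bullet> (U *v h) = (U *v v) \<bullet> (U *v h1) + (U *v v) \<bullet> (U *v h2)"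
        unfolding hsplit by (simp add: matrix_vector_right_distrib inner_add_right)
      finally have vg2: "(norm v)^2 = - ((U *v v) \<bullet> (U *v h1) + (U *v v) \<bullet> (U *v h2))"
        using vg by simp
      have sv: "supp v \<subseteq> J'" unfolding v_def by (rule supp_restr)
      have cJ': "card J' \<le> s" using J' by simp
      have b1: "\<bar>(U *v v) \<bullet> (U *v h1)\<bar> \<le> th * norm v * norm h1"
        unfolding th_def using roc_bound(1)[OF cJ' cardSs J'Ss sv supp_restr] h1_def by simp
      have b2: "\<bar>(U *v v) \<bullet> (U *v h2)\<bar> \<le> th * norm v * norm h2"
        unfolding th_def using roc_bound(1)[OF cJ' cardA J'A sv supp_restr] h2_def by simp
      have h12: "h1 \<bullet> h2 = 0"
        unfolding h1_def inner_restr by (intro sum.neutral) (auto simp: restr_def A_def h2_def)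
      have nh: "(norm h)^2 = (norm h1)^2 + (norm h2)^2"
        using h12 by (simp add: hsplit power2_norm_eq_inner inner_add_left inner_add_right inner_commute)
      have "(norm h1 + norm h2)^2 \<le> (sqrt 2 * norm h)^2"
      proof -
        have "(norm h1 + norm h2)^2 \<le> 2 * ((norm h1)^2 + (norm h2)^2)"
          using sum_squares_ge_zero[of "norm h1 - norm h2" 0]
          by (simp add: power2_eq_square algebra_simps)
        also have "\<dots> = (sqrt 2 * norm h)^2" using nh by (simp add: power_mult_distrib)
        finally show ?thesis .
      qed
      hence n12: "norm h1 + norm h2 \<le> sqrt 2 * norm h"
        by (rule power2_le_imp_le) simp
      have "(norm v)^2 \<le> th * norm v * norm h1 + th * norm v * norm h2"
        using vg2 b1 b2 by linarith
      also have "\<dots> = th * norm v * (norm h1 + norm h2)" by (simp add: algebra_simps)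
      also have "\<dots> \<le> th * norm v * (sqrt 2 * norm h)"
        by (rule mult_left_mono[OF n12]) (simp add: th0)
      also have "\<dots> \<le> norm v * c"
      proof -
        have "sqrt 2 * th * norm h \<le> sqrt 2 * th * Delta"
          using hD th0 by (simp add: mult_left_mono)
        also have "\<dots> \<le> c" unfolding c_def using dl0 Dnn by (simp add: algebra_simps)
        finally have "sqrt 2 * th * norm h \<le> c" .
        thus ?thesis by (metis mult_left_mono norm_ge_zero mult.commute mult.left_commute)
      qed
      finally have vc: "(norm v)^2 \<le> norm v * c" .
      have spos: "s > 0" using False by simp
      have "(norm v)^2 = (\<Sum>i\<in>J'. (g$i)^2)" by (simp add: v_def norm_restr_sq)
      also have "\<dots> > (\<Sum>i\<in>J'. (c / sqrt s)^2)"
      proof (rule sum_strict_mono)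
        show "finite J'" by fact
        show "J' \<noteq> {}" using J' spos by auto
        fix i assume "i \<in> J'"
        hence "c / sqrt s < \<bar>g$i\<bar>" using gbig J' by auto
        hence "(c / sqrt s)^2 < \<bar>g$i\<bar>^2" by (rule power_strict_mono) (use c0 in auto)
        thus "(c / sqrt s)^2 < (g$i)^2" by simp
      qed
      finally have "(\<Sum>i\<in>J'. (c / sqrt s)^2) < (norm v)^2" .
      moreover have "(\<Sum>i\<in>J'. (c / sqrt s)^2) = c^2"
        using J' spos by (simp add: power_divide)
      ultimately have cv2: "c^2 < (norm v)^2" by simp
      hence cv: "c < norm v" by (rule power2_less_imp_less) simp
      have "0 < norm v" using cv c0 by linarith
      hence "norm v * c < norm v * norm v" using mult_strict_left_mono[OF cv] by blast
      thus False using vc by (simp add: power2_eq_square)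
    qed
  qed
  have cardT2: "card T2 \<le> 3 * s"
  proof -
    have "card T2 \<le> card (Ss \<union> A) + card Jr" unfolding T2_def by (rule card_Un_le)
    also have "\<dots> \<le> card Ss + card A + card Jr" using card_Un_le[of Ss A] by simp
    finally show ?thesis using cardSs cardA cardJr by simp
  qed
  define u where "u = restr T2 g"
  have shT: "supp h \<subseteq> T2" using suph by (auto simp: T2_def)
  have ug: "u \<bullet> g = (norm u)^2"
    unfolding u_def norm_restr_sq inner_restr by (simp add: power2_eq_square)
  have "u \<bullet> g = u \<bullet> h - (U *v u) \<bullet> (U *v h)"
    unfolding g_def inner_diff_right inner_transpose by simp
  hence "(norm u)^2 \<le> dth * norm u * norm h"
    using pol_bound[OF cardT2 supp_restr shT, of g U] ug unfolding u_def dth_def by simp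
  hence uh: "norm u \<le> dth * norm h"
    by (cases "norm u = 0") (simp_all add: d30 power2_eq_square mult.assoc)
  define ev where "ev = ista U y lam (Suc t) - xs"
  define kp where "kp = En + l"
  have kp0: "0 \<le> kp" using En0 lEn by (simp add: kp_def)
  have evc: "ev$i = sgn (xs$i + w$i) * max (\<bar>xs$i + w$i\<bar> - l) 0 - xs$i" for i
    unfolding ev_def x1 soft_thr_def by simp
  have evS: "\<bar>ev$i\<bar> \<le> \<bar>g$i\<bar> + kp" for i
  proof -
    have "ev$i = (sgn (xs$i + w$i) * max (\<bar>xs$i + w$i\<bar> - l) 0 - (xs$i + w$i)) + w$i"
      by (simp add: evc)
    thus ?thesis using soft_close[OF lpos, of "xs$i + w$i"] gi[of i] unfolding kp_def
      by (smt (verit) abs_triangle_ineq)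
  qed
  have xs0: "xs$i = 0" if "i \<notin> Ss" for i using that by (simp add: Ss_def supp_def)
  have evJ: "\<bar>ev$i\<bar> \<le> \<bar>g$i\<bar>" if "i \<in> J" for i
  proof -
    have "i \<notin> Ss" "\<bar>w$i\<bar> > l" using that by (auto simp: J_def)
    hence "\<bar>ev$i\<bar> = \<bar>w$i\<bar> - l" using soft_abs[OF lpos, of "w$i"] by (simp add: evc xs0)
    thus ?thesis using gi[of i] lEn by simp
  qed
  have evO: "ev$i = 0" if "i \<notin> Ss" "i \<notin> J" for i
  proof -
    have "\<bar>w$i\<bar> \<le> l" using that by (auto simp: J_def)
    thus ?thesis using that by (simp add: evc xs0)
  qed
  define a where "a = L2_set (\<lambda>i. g$i) Ss"
  define q where "q = sqrt s * kp"
  have q0: "0 \<le> q" using kp0 by (simp add: q_def)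
  have a0: "0 \<le> a" by (simp add: a_def)
  have JSs: "Ss \<inter> J = {}" by (auto simp: J_def)
  have nev: "(norm ev)^2 = (\<Sum>i\<in>Ss. (ev$i)^2) + (\<Sum>i\<in>J. (ev$i)^2)"
  proof -
    have "(norm ev)^2 = (\<Sum>i\<in>UNIV. (ev$i)^2)" by (rule norm_sq_sum)
    also have "\<dots> = (\<Sum>i\<in>Ss \<union> J. (ev$i)^2)"
      by (rule sum.mono_neutral_right) (auto simp: evO)
    also have "\<dots> = (\<Sum>i\<in>Ss. (ev$i)^2) + (\<Sum>i\<in>J. (ev$i)^2)"
      by (rule sum.union_disjoint) (auto simp: JSs)
    finally show ?thesis .
  qed
  have PS: "(\<Sum>i\<in>Ss. (ev$i)^2) \<le> (a + q)^2"
  proof -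
    have "(\<Sum>i\<in>Ss. (ev$i)^2) \<le> (\<Sum>i\<in>Ss. (\<bar>g$i\<bar> + kp)^2)"
    proof (rule sum_mono)
      fix i
      have "\<bar>ev$i\<bar>^2 \<le> (\<bar>g$i\<bar> + kp)^2" by (rule power_mono[OF evS]) simp
      thus "(ev$i)^2 \<le> (\<bar>g$i\<bar> + kp)^2" by simp
    qed
    also have "\<dots> = (L2_set (\<lambda>i. \<bar>g$i\<bar> + kp) Ss)^2"
      unfolding L2_set_def by (simp add: sum_nonneg)
    also have "\<dots> \<le> (a + q)^2"
    proof (rule power_mono)
      have "L2_set (\<lambda>i. \<bar>g$i\<bar> + kp) Ss \<le> L2_set (\<lambda>i. \<bar>g$i\<bar>) Ss + L2_set (\<lambda>i. kp) Ss"
        by (rule L2_set_triangle_ineq)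
      also have "L2_set (\<lambda>i. \<bar>g$i\<bar>) Ss = a" unfolding a_def L2_set_def by simp
      also have "L2_set (\<lambda>i. kp) Ss = sqrt (card Ss) * kp" using kp0 by (simp add: L2_set_constant)
      also have "sqrt (card Ss) * kp \<le> q" unfolding q_def
        using cardSs kp0 by (intro mult_right_mono) auto
      finally show "L2_set (\<lambda>i. \<bar>g$i\<bar> + kp) Ss \<le> a + q" by simp
      show "0 \<le> L2_set (\<lambda>i. \<bar>g$i\<bar> + kp) Ss" by simp
    qed
    finally show ?thesis .
  qed
  have QJ: "(\<Sum>i\<in>J. (ev$i)^2) \<le> (\<Sum>i\<in>J. (g$i)^2)"
  proof (rule sum_mono)
    fix i assume "i \<in> J"
    hence "\<bar>ev$i\<bar>^2 \<le> \<bar>g$i\<bar>^2" by (intro power_mono evJ) auto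
    thus "(ev$i)^2 \<le> (g$i)^2" by simp
  qed
  have a2: "a^2 = (\<Sum>i\<in>Ss. (g$i)^2)" unfolding a_def L2_set_def by (simp add: sum_nonneg)
  have R2: "a^2 + (\<Sum>i\<in>J. (g$i)^2) \<le> (norm u)^2"
  proof -
    have "a^2 + (\<Sum>i\<in>J. (g$i)^2) = (\<Sum>i\<in>Ss \<union> J. (g$i)^2)"
      unfolding a2 by (rule sum.union_disjoint[symmetric]) (auto simp: JSs)
    also have "\<dots> \<le> (\<Sum>i\<in>T2. (g$i)^2)"
      by (rule sum_mono2) (auto simp: T2_def Jr_def)
    also have "\<dots> = (norm u)^2" by (simp add: u_def norm_restr_sq)
    finally show ?thesis .
  qed
  have bJ0: "0 \<le> (\<Sum>i\<in>J. (g$i)^2)" by (simp add: sum_nonneg)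
  have "a^2 \<le> (norm u)^2" using R2 bJ0 by linarith
  hence aR: "a \<le> norm u" using power2_le_imp_le norm_ge_zero by blast
  have "(norm ev)^2 \<le> (norm u + q)^2"
  proof -
    have "(norm ev)^2 \<le> (a + q)^2 + (\<Sum>i\<in>J. (g$i)^2)" using nev PS QJ by linarith
    also have "\<dots> = a^2 + (\<Sum>i\<in>J. (g$i)^2) + 2 * a * q + q^2" by (simp add: power2_sum)
    also have "\<dots> \<le> (norm u)^2 + 2 * norm u * q + q^2"
      using R2 mult_right_mono[OF aR q0] by linarith
    also have "\<dots> = (norm u + q)^2" by (simp add: power2_sum)
    finally show ?thesis .
  qed
  hence nev2: "norm ev \<le> norm u + q" by (rule power2_le_imp_le) (simp add: q0)
  have "norm u \<le> dth * Delta" using uh hD d30 by (meson mult_left_mono order_trans)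
  moreover have "q \<le> 2 * sqrt s * En + c"
  proof -
    have "q = 2 * sqrt s * En + sqrt s * (c / sqrt s)" unfolding q_def kp_def lam_eq
      by (simp add: algebra_simps)
    also have "sqrt s * (c / sqrt s) \<le> c" using c0 by (cases "s = 0") auto
    finally show ?thesis by simp
  qed
  moreover have "2 * sqrt s * En \<le> (1 + sqrt 2) * sqrt s * En"
    using En0 by (intro mult_right_mono) auto
  ultimately have "norm ev \<le> dth * Delta + c + (1 + sqrt 2) * sqrt s * En" using nev2 by linarith
  thus ?thesis by (simp add: ev_def dth_def c_def dl_def th_def En_def E_def algebra_simps)
qed

end
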